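(* Let $n\ge 2$, $N=n^2+1$, $m=(n-1)^2+1$, let $F,D\in\mathcal{S}^n$, $C\in\mathbb{R}^{n\times n}$, let $$L_Q=\begin{pmatrix}0&-\tfrac12\mathrm{vec}(C)^T\\ -\tfrac12\mathrm{vec}(C)& D\otimes F\end{pmatrix}\in\mathcal{S}^{N},$$ let $\hat V\in\mathbb{R}^{N\times m}$ be the matrix described in the context, let $J$ be a given set of index pairs of $N\times N$ matrices, and fix $\mu>0$. Suppose $(R^*,Z^* )$, with $R^*\in\mathcal{S}^m$, $Z^*\in\mathcal{S}^N$, is the unique solution of the system $$(-\hat V^TZ\hat V)R=\mu I,\quad \mathcal{G}_J(\hat VR\hat V^T)=E_{00},\quad -(L_Q+Z)\in\mathcal{S}^{N}_J,\quad R\succeq O,\quad -\hat V^TZ\hat V\succeq O.$$ Let $Y^*=\hat VR^*\hat V^T$. Then $$\max_{Z\in\mathcal{S}^N}L_0^{\rm BQAP}(R^*,Y^*,Z)=L_0^{\rm BQAP}(R^*,Y^*,Z^* )=\min_{R\succ O,\;Y\in\mathcal{S}^N}L_0^{\rm BQAP}(R,Y,Z^* ),$$ i.e. $(R^*,Y^*,Z^* )$ is a saddle point of $L_0^{\rm BQAP}$.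
   Context: $\mathcal{S}^k$ is the space of real symmetric $k\times k$ matrices, $\langle A,B\rangle=\mathrm{Tr}(A^TB)$, $\succeq$ / $\succ$ denote positive semidefinite / definite, $\mathrm{vec}(C)$ stacks the columns of $C$, and $\otimes$ is the Kronecker product. $\hat V$ is the column-normalized version of $\bar V=\begin{pmatrix}1&0^T\\ \frac1n(e\otimes e)&V\otimes V\end{pmatrix}$, $V=\begin{pmatrix}I_{n-1}\\ -e^T\end{pmatrix}$, $e$ the all-ones vector, so that $\hat V^T\hat V=I$. The gangster operator $\mathcal{G}_J:\mathcal{S}^N\to\mathcal{S}^N$ is $(\mathcal{G}_J(Y))_{ij}=Y_{ij}$ if $(i,j)\in J$ or $(j,i)\in J$, and $0$ otherwise; $\mathcal{S}^N_J=\{X\in\mathcal{S}^N:\mathcal{G}_J(X)=X\}$. $E_{00}\in\mathcal{S}^N$ is the matrix whose $(1,1)$ entry is $1$ and all others $0$. $\mathcal{I}(Y)=0$ if $\mathcal{G}_J(Y)=E_{00}$ and $+\infty$ otherwise. The unaugmented Lagrangian is, for $R\succ O$, $Y,Z\in\mathcal{S}^N$, $$L_0^{\rm BQAP}(R,Y,Z)=\langle L_Q,Y\rangle-\mu\log(\det R)+\mathcal{I}(Y)+\langle Z,\,Y-\hat VR\hat V^T\rangle.$$ *)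

theory Defs
  imports Complex_Main "HOL-Library.Extended_Real" "Jordan_Normal_Form.Determinant"
begin

(* Matrices are Jordan_Normal_Form matrices with 0-based indices. *)

definition mtrace :: "real mat \<Rightarrow> real" where
  "mtrace A = (\<Sum>i<dim_row A. A $$ (i,i))"

definition minner :: "real mat \<Rightarrow> real mat \<Rightarrow> real" where
  "minner A B = mtrace (transpose_mat A * B)"

definition SymM :: "nat \<Rightarrow> real mat set" where
  "SymM k = {A. A \<in> carrier_mat k k \<and> transpose_mat A = A}"

definition psd :: "nat \<Rightarrow> real mat \<Rightarrow> bool" where
  "psd k A \<longleftrightarrow> A \<in> carrier_mat k k \<and> (\<forall>x\<in>carrier_vec k. 0 \<le> x \<bullet> (A *\<^sub>v x))"

definition pd :: "nat \<Rightarrow> real mat \<Rightarrow> bool" where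
  "pd k A \<longleftrightarrow> A \<in> carrier_mat k k \<and> (\<forall>x\<in>carrier_vec k. x \<noteq> 0\<^sub>v k \<longrightarrow> 0 < x \<bullet> (A *\<^sub>v x))"

definition mvec :: "real mat \<Rightarrow> real vec" where
  "mvec C = vec (dim_row C * dim_col C) (\<lambda>k. C $$ (k mod dim_row C, k div dim_row C))"

definition kron :: "real mat \<Rightarrow> real mat \<Rightarrow> real mat" where
  "kron A B = mat (dim_row A * dim_row B) (dim_col A * dim_col B)
     (\<lambda>(i,j). A $$ (i div dim_row B, j div dim_col B) * B $$ (i mod dim_row B, j mod dim_col B))"

definition LQ :: "nat \<Rightarrow> real mat \<Rightarrow> real mat \<Rightarrow> real mat \<Rightarrow> real mat" where
  "LQ n C D F = mat (n^2+1) (n^2+1) (\<lambda>(i,j).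
     if i = 0 \<and> j = 0 then 0
     else if i = 0 then - (1/2) * mvec C $ (j - 1)
     else if j = 0 then - (1/2) * mvec C $ (i - 1)
     else kron D F $$ (i - 1, j - 1))"

definition Vmat :: "nat \<Rightarrow> real mat" where
  "Vmat n = mat n (n - 1) (\<lambda>(i,j). if i < n - 1 then (if i = j then 1 else 0) else -1)"

definition Vbar :: "nat \<Rightarrow> real mat" where
  "Vbar n = mat (n^2+1) ((n-1)^2+1) (\<lambda>(i,j).
     if i = 0 then (if j = 0 then 1 else 0)
     else if j = 0 then 1 / real n
     else kron (Vmat n) (Vmat n) $$ (i - 1, j - 1))"

definition Vhat :: "nat \<Rightarrow> real mat" where
  "Vhat n = mat (n^2+1) ((n-1)^2+1) (\<lambda>(i,j).
     Vbar n $$ (i,j) / sqrt (\<Sum>k<n^2+1. (Vbar n $$ (k,j))^2))"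

definition gangster :: "(nat \<times> nat) set \<Rightarrow> real mat \<Rightarrow> real mat" where
  "gangster J Y = mat (dim_row Y) (dim_col Y)
     (\<lambda>(i,j). if (i,j) \<in> J \<or> (j,i) \<in> J then Y $$ (i,j) else 0)"

definition SymJ :: "nat \<Rightarrow> (nat \<times> nat) set \<Rightarrow> real mat set" where
  "SymJ k J = {X \<in> SymM k. gangster J X = X}"

definition E00 :: "nat \<Rightarrow> real mat" where
  "E00 k = mat k k (\<lambda>(i,j). if i = 0 \<and> j = 0 then 1 else 0)"

definition indI :: "(nat \<times> nat) set \<Rightarrow> nat \<Rightarrow> real mat \<Rightarrow> ereal" where
  "indI J k Y = (if gangster J Y = E00 k then 0 else \<infinity>)"

(* unaugmented Lagrangian L_0^{BQAP}(R,Y,Z) (meaningful for R \<succ> O) *)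
definition L0 :: "nat \<Rightarrow> real mat \<Rightarrow> real mat \<Rightarrow> real mat \<Rightarrow> (nat \<times> nat) set \<Rightarrow> real
                   \<Rightarrow> real mat \<Rightarrow> real mat \<Rightarrow> real mat \<Rightarrow> ereal" where
  "L0 n C D F J \<mu> R Y Z =
     ereal (minner (LQ n C D F) Y - \<mu> * ln (det R)
            + minner Z (Y - Vhat n * R * transpose_mat (Vhat n)))
     + indI J (n^2+1) Y"

definition KKT :: "nat \<Rightarrow> real mat \<Rightarrow> real mat \<Rightarrow> real mat \<Rightarrow> (nat \<times> nat) set \<Rightarrow> real
                   \<Rightarrow> real mat \<Rightarrow> real mat \<Rightarrow> bool" where
  "KKT n C D F J \<mu> R Z \<longleftrightarrow>
     (- (transpose_mat (Vhat n) * Z * Vhat n)) * R = \<mu> \<cdot>\<^sub>m 1\<^sub>m ((n-1)^2+1)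
   \<and> gangster J (Vhat n * R * transpose_mat (Vhat n)) = E00 (n^2+1)
   \<and> - (LQ n C D F + Z) \<in> SymJ (n^2+1) J
   \<and> psd ((n-1)^2+1) R
   \<and> psd ((n-1)^2+1) (- (transpose_mat (Vhat n) * Z * Vhat n))"

end

theory Submission
  imports Defs "Jordan_Normal_Form.Schur_Decomposition"
begin


definition hf :: "nat \<Rightarrow> complex mat \<Rightarrow> complex vec \<Rightarrow> complex" where
  "hf m M x = (\<Sum>i<m. \<Sum>j<m. cnj (x$i) * M$$(i,j) * x$j)"

lemma t1: "Re (cnj a * complex_of_real r * b) = Re a * r * Re b + Im a * r * Im b"
  by (simp add: algebra_simps)
lemma t2: "Im (cnj a * complex_of_real r * b) = Re a * r * Im b - Im a * r * Re b"
  by (simp add: algebra_simps)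

lemma quad_sum: assumes M: "M \<in> carrier_mat m m" and a: "a \<in> carrier_vec m"
  shows "a \<bullet> (M *\<^sub>v a) = (\<Sum>i<m. \<Sum>j<m. a$i * M$$(i,j) * a$j)"
proof -
  have "a \<bullet> (M *\<^sub>v a) = (\<Sum>i<m. a$i * (\<Sum>j<m. M$$(i,j) * a$j))"
    using M a by (simp add: scalar_prod_def atLeast0LessThan)
  also have "\<dots> = (\<Sum>i<m. \<Sum>j<m. a$i * M$$(i,j) * a$j)"
    by (simp add: sum_distrib_left mult.assoc)
  finally show ?thesis .
qed

lemma hf_real_pos:
  fixes M :: "real mat" and x :: "complex vec"
  assumes M: "M \<in> carrier_mat m m" and sym: "transpose_mat M = M" and pd: "pd m M"
    and x: "x \<in> carrier_vec m" and x0: "x \<noteq> 0\<^sub>v m"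
  shows "\<exists>p>0. hf m (map_mat complex_of_real M) x = complex_of_real p"
proof -
  define a where "a = vec m (\<lambda>i. Re (x$i))"
  define b where "b = vec m (\<lambda>i. Im (x$i))"
  have symij: "\<And>i j. i < m \<Longrightarrow> j < m \<Longrightarrow> M$$(j,i) = M$$(i,j)"
    using sym M by (metis carrier_matD index_transpose_mat(1))
  have ac: "a \<in> carrier_vec m" and bc: "b \<in> carrier_vec m" unfolding a_def b_def by auto
  have qa: "a \<bullet> (M *\<^sub>v a) = (\<Sum>i<m. \<Sum>j<m. Re (x$i) * M$$(i,j) * Re (x$j))"
    unfolding quad_sum[OF M ac] by (intro sum.cong refl) (simp add: a_def)
  have qb: "b \<bullet> (M *\<^sub>v b) = (\<Sum>i<m. \<Sum>j<m. Im (x$i) * M$$(i,j) * Im (x$j))"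
    unfolding quad_sum[OF M bc] by (intro sum.cong refl) (simp add: b_def)
  have hfe: "hf m (map_mat complex_of_real M) x = (\<Sum>i<m. \<Sum>j<m. cnj (x$i) * complex_of_real (M$$(i,j)) * x$j)"
    unfolding hf_def using M by (intro sum.cong refl) auto
  have Re: "Re (hf m (map_mat complex_of_real M) x) = a \<bullet> (M *\<^sub>v a) + b \<bullet> (M *\<^sub>v b)"
    unfolding qa qb hfe by (simp add: t1 sum.distrib)
  have "Im (hf m (map_mat complex_of_real M) x) = 
     (\<Sum>i<m. \<Sum>j<m. Re (x$i) * M$$(i,j) * Im (x$j)) - (\<Sum>i<m. \<Sum>j<m. Im (x$i) * M$$(i,j) * Re (x$j))"
    unfolding hfe by (simp add: t2 sum_subtractf)
  also have "(\<Sum>i<m. \<Sum>j<m. Im (x$i) * M$$(i,j) * Re (x$j)) = (\<Sum>j<m. \<Sum>i<m. Im (x$i) * M$$(i,j) * Re (x$j))"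
    by (rule sum.swap)
  also have "\<dots> = (\<Sum>i<m. \<Sum>j<m. Re (x$i) * M$$(i,j) * Im (x$j))"
    by (intro sum.cong refl) (simp add: symij mult.commute mult.left_commute)
  finally have Im: "Im (hf m (map_mat complex_of_real M) x) = 0" by simp
  have psd: "\<And>y. y \<in> carrier_vec m \<Longrightarrow> 0 \<le> y \<bullet> (M *\<^sub>v y)"
  proof -
    fix y :: "real vec" assume y: "y \<in> carrier_vec m"
    show "0 \<le> y \<bullet> (M *\<^sub>v y)"
    proof (cases "y = 0\<^sub>v m")
      case True thus ?thesis using M by simp
    next
      case False thus ?thesis using pd y unfolding pd_def by (simp add: less_imp_le)
    qed
  qed
  have "a \<noteq> 0\<^sub>v m \<or> b \<noteq> 0\<^sub>v m"
  proof (rule ccontr)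
    assume "\<not> ?thesis"
    hence ab: "a = 0\<^sub>v m" "b = 0\<^sub>v m" by auto
    have "x = 0\<^sub>v m"
    proof (rule eq_vecI)
      fix i assume "i < dim_vec (0\<^sub>v m :: complex vec)"
      hence i: "i < m" by simp
      have "Re (x$i) = 0" "Im (x$i) = 0"
        using arg_cong[OF ab(1), of "\<lambda>v. v$i"] arg_cong[OF ab(2), of "\<lambda>v. v$i"] i
        unfolding a_def b_def by auto
      thus "x $ i = 0\<^sub>v m $ i" using i by (simp add: complex_eq_iff)
    qed (use x in auto)
    with x0 show False by simp
  qed
  moreover have "a \<in> carrier_vec m" "b \<in> carrier_vec m" unfolding a_def b_def by auto
  ultimately have "0 < a \<bullet> (M *\<^sub>v a) + b \<bullet> (M *\<^sub>v b)"
    using pd psd[of a] psd[of b] unfolding pd_def by force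
  thus ?thesis using Re Im by (intro exI[of _ "Re (hf m (map_mat complex_of_real M) x)"]) (auto simp: complex_eq_iff)
qed

lemma hf_alt: assumes M: "M \<in> carrier_mat m m" and y: "y \<in> carrier_vec m"
  shows "hf m M y = (\<Sum>i<m. cnj (y$i) * (M *\<^sub>v y)$i)"
  unfolding hf_def using M y
  by (intro sum.cong refl) (simp add: scalar_prod_def atLeast0LessThan sum_distrib_left mult.assoc)

lemma eig_pos:
  fixes W R :: "real mat"
  assumes W: "W \<in> carrier_mat m m" and R: "R \<in> carrier_mat m m"
    and sW: "transpose_mat W = W" and sR: "transpose_mat R = R"
    and pW: "pd m W" and pR: "pd m R"
    and ev: "eigenvalue (map_mat complex_of_real (W * R)) c"
  shows "\<exists>r>0. c = complex_of_real r"
proof -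
  define Wc where "Wc = map_mat complex_of_real W"
  define Rc where "Rc = map_mat complex_of_real R"
  have Wc: "Wc \<in> carrier_mat m m" and Rc: "Rc \<in> carrier_mat m m" using W R unfolding Wc_def Rc_def by auto
  have A: "map_mat complex_of_real (W * R) = Wc * Rc"
    unfolding Wc_def Rc_def by (rule of_real_hom.mat_hom_mult[OF W R])
  from ev obtain v where v: "v \<in> carrier_vec m" and v0: "v \<noteq> 0\<^sub>v m"
    and Av: "(Wc * Rc) *\<^sub>v v = c \<cdot>\<^sub>v v"
    unfolding eigenvalue_def eigenvector_def A using Wc by auto
  define u where "u = Rc *\<^sub>v v"
  have u: "u \<in> carrier_vec m" unfolding u_def by (rule mult_mat_vec_carrier[OF Rc v])
  have Wu: "Wc *\<^sub>v u = c \<cdot>\<^sub>v v" unfolding u_def using Av Wc Rc v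
    by (metis assoc_mult_mat_vec)
  define S where "S = (\<Sum>i<m. cnj (u$i) * v$i)"
  have c1: "hf m Wc u = c * S"
    unfolding hf_alt[OF Wc u] Wu S_def using v
    by (simp add: sum_distrib_left algebra_simps)
  have symij: "\<And>i j. i < m \<Longrightarrow> j < m \<Longrightarrow> R$$(j,i) = R$$(i,j)"
    using sR R by (metis carrier_matD index_transpose_mat(1))
  have "S = (\<Sum>i<m. (\<Sum>j<m. complex_of_real (R$$(i,j)) * cnj (v$j)) * v$i)"
    unfolding S_def u_def using Rc R v
    by (intro sum.cong refl) (simp add: scalar_prod_def atLeast0LessThan Rc_def)
  also have "\<dots> = (\<Sum>i<m. \<Sum>j<m. complex_of_real (R$$(i,j)) * cnj (v$j) * v$i)"
    by (simp add: sum_distrib_right)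
  also have "\<dots> = (\<Sum>j<m. \<Sum>i<m. complex_of_real (R$$(i,j)) * cnj (v$j) * v$i)"
    by (rule sum.swap)
  also have "\<dots> = hf m Rc v"
    unfolding hf_def using R
    by (intro sum.cong refl) (simp add: Rc_def symij mult.commute mult.left_commute)
  finally have c2: "S = hf m Rc v" .
  obtain p where p: "p > 0" "hf m Rc v = complex_of_real p"
    using hf_real_pos[OF R sR pR v v0] unfolding Rc_def by blast
  have "u \<noteq> 0\<^sub>v m"
  proof
    assume "u = 0\<^sub>v m"
    hence "S = 0" unfolding S_def by simp
    with c2 p show False by simp
  qed
  then obtain q where q: "q > 0" "hf m Wc u = complex_of_real q"
    using hf_real_pos[OF W sW pW u] unfolding Wc_def by blast
  have "complex_of_real q = c * complex_of_real p" using c1 c2 p q by simp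
  hence "c = complex_of_real (q / p)" using p by (simp add: field_simps)
  thus ?thesis using p q by (intro exI[of _ "q/p"]) auto
qed

definition ctr :: "'a::comm_ring_1 mat \<Rightarrow> 'a" where
  "ctr A = (\<Sum>i<dim_row A. A$$(i,i))"

lemma mtrace_ctr: "mtrace A = ctr A" unfolding mtrace_def ctr_def ..

lemma ctr_comm: assumes A: "A \<in> carrier_mat n k" and B: "B \<in> carrier_mat k n"
  shows "ctr (A * B) = ctr (B * A)"
proof -
  have "ctr (A * B) = (\<Sum>i<n. \<Sum>j<k. A$$(i,j) * B$$(j,i))"
    unfolding ctr_def using A B by (intro sum.cong refl) (auto simp: scalar_prod_def atLeast0LessThan)
  also have "\<dots> = (\<Sum>j<k. \<Sum>i<n. A$$(i,j) * B$$(j,i))" by (rule sum.swap)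
  also have "\<dots> = ctr (B * A)"
    unfolding ctr_def using A B by (intro sum.cong refl) (auto simp: scalar_prod_def atLeast0LessThan mult.commute)
  finally show ?thesis .
qed


lemma ctr_of_real: assumes "A \<in> carrier_mat n n"
  shows "ctr (map_mat complex_of_real A) = complex_of_real (ctr A)"
  unfolding ctr_def using assms by (auto intro!: sum.cong)

lemma poly_root_in: "(c::complex) \<in> set cs \<Longrightarrow> poly (\<Prod>a\<leftarrow>cs. [:- a, 1:]) c = 0"
  by (induct cs) (auto simp: algebra_simps)

lemma eig_list:
  fixes W R :: "real mat"
  assumes W: "W \<in> carrier_mat m m" and R: "R \<in> carrier_mat m m"
    and sW: "transpose_mat W = W" and sR: "transpose_mat R = R"
    and pW: "pd m W" and pR: "pd m R"
  shows "\<exists>es. length es = m \<and> (\<forall>e\<in>set es. e > 0) \<and> det (W * R) = prod_list es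
          \<and> mtrace (W * R) = sum_list es"
proof -
  define A where "A = map_mat complex_of_real (W * R)"
  have Ac: "A \<in> carrier_mat m m" unfolding A_def using W R by auto
  obtain cs where cp: "char_poly A = (\<Prod>a\<leftarrow>cs. [:- a, 1:])" and lcs: "length cs = m"
    using char_poly_factorized[OF Ac] by blast
  obtain B P Q where sd: "schur_decomposition A cs = (B,P,Q)" by (metis prod_cases3)
  from schur_decomposition[OF Ac cp sd]
  have sim: "similar_mat_wit A B P Q" and ut: "upper_triangular B" and dg: "diag_mat B = cs" by auto
  from sim Ac have Bc: "B \<in> carrier_mat m m" and Pc: "P \<in> carrier_mat m m" and Qc: "Q \<in> carrier_mat m m"
    and PQ: "P * Q = 1\<^sub>m m" and QP: "Q * P = 1\<^sub>m m" and APBQ: "A = P * B * Q"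
    unfolding similar_mat_wit_def Let_def by auto
  have "det A = det P * det B * det Q"
    unfolding APBQ det_mult[OF mult_carrier_mat[OF Pc Bc] Qc] det_mult[OF Pc Bc] ..
  also have "\<dots> = det (P * Q) * det B" unfolding det_mult[OF Pc Qc] by (simp add: ac_simps)
  also have "\<dots> = prod_list cs" using PQ det_upper_triangular[OF ut Bc] dg by simp
  finally have detA: "det A = prod_list cs" .
  have "ctr A = ctr (P * (B * Q))" unfolding APBQ using assoc_mult_mat[OF Pc Bc Qc] by simp
  also have "\<dots> = ctr ((B * Q) * P)" using Pc Bc Qc by (intro ctr_comm[of _ m m]) auto
  also have "\<dots> = ctr B" using assoc_mult_mat[OF Bc Qc Pc] QP Bc by simp
  also have "\<dots> = sum_list cs" unfolding dg[symmetric] diag_mat_def ctr_def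
    using sum_set_upt_conv_sum_list_nat[of "\<lambda>i. B $$ (i, i)" 0 "dim_row B"]
    by (simp add: atLeast0LessThan)
  finally have trA: "ctr A = sum_list cs" .
  have pos: "\<forall>c\<in>set cs. \<exists>r>0. c = complex_of_real r"
  proof
    fix c assume "c \<in> set cs"
    hence "poly (char_poly A) c = 0" unfolding cp by (rule poly_root_in)
    hence "eigenvalue A c" using eigenvalue_root_char_poly[OF Ac] by simp
    hence "eigenvalue (map_mat complex_of_real (W * R)) c" unfolding A_def .
    from eig_pos[OF W R sW sR pW pR this] show "\<exists>r>0. c = complex_of_real r" .
  qed
  define es where "es = map Re cs"
  have "map (\<lambda>c. complex_of_real (Re c)) cs = cs"
  proof (rule map_idI)
    fix c assume "c \<in> set cs"
    then obtain r where "c = complex_of_real r" using pos by blast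
    thus "complex_of_real (Re c) = c" by simp
  qed
  hence cses: "cs = map complex_of_real es" unfolding es_def by (simp add: o_def)
  have d1: "det A = complex_of_real (det (W * R))" unfolding A_def by (rule of_real_hom.hom_det)
  have d2: "prod_list cs = complex_of_real (prod_list es)" unfolding cses by (rule of_real_hom.hom_prod_list[symmetric])
  have t1: "ctr A = complex_of_real (mtrace (W * R))" unfolding A_def mtrace_ctr by (rule ctr_of_real[OF mult_carrier_mat[OF W R]])
  have t2: "sum_list cs = complex_of_real (sum_list es)" unfolding cses by (rule of_real_hom.hom_sum_list[symmetric])
  have "det (W * R) = prod_list es" using detA d1 d2 of_real_eq_iff by metis
  moreover have "mtrace (W * R) = sum_list es" using trA t1 t2 of_real_eq_iff by metis
  moreover have "\<forall>e\<in>set es. e > 0"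
  proof
    fix e assume "e \<in> set es"
    then obtain c where c: "c \<in> set cs" "e = Re c" unfolding es_def by auto
    then obtain r where "r > 0" "c = complex_of_real r" using pos by blast
    thus "e > 0" using c by simp
  qed
  moreover have "length es = m" using lcs unfolding es_def by simp
  ultimately show ?thesis by blast
qed



lemma bil_sum: assumes M: "M \<in> carrier_mat m m" and x: "x \<in> carrier_vec m" and y: "y \<in> carrier_vec m"
  shows "x \<bullet> (M *\<^sub>v y) = (\<Sum>i<m. \<Sum>j<m. x$i * M$$(i,j) * y$j)"
proof -
  have "x \<bullet> (M *\<^sub>v y) = (\<Sum>i<m. x$i * (\<Sum>j<m. M$$(i,j) * y$j))"
    using M x y by (simp add: scalar_prod_def atLeast0LessThan)
  also have "\<dots> = (\<Sum>i<m. \<Sum>j<m. x$i * M$$(i,j) * y$j)"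
    by (simp add: sum_distrib_left mult.assoc)
  finally show ?thesis .
qed

lemma expand4: "(a + s * b) * (m::real) * (c + s * d) = a * m * c + s * (a * m * d) + s * (b * m * c) + s^2 * (b * m * d)"
  by (simp add: algebra_simps power2_eq_square)

lemma psd_zero:
  fixes M :: "real mat"
  assumes M: "M \<in> carrier_mat m m" and sym: "transpose_mat M = M" and ps: "psd m M"
    and x: "x \<in> carrier_vec m" and x0: "x \<bullet> (M *\<^sub>v x) = 0"
  shows "M *\<^sub>v x = 0\<^sub>v m"
proof -
  define y where "y = M *\<^sub>v x"
  have y: "y \<in> carrier_vec m" unfolding y_def using M x by simp
  have symij: "\<And>i j. i < m \<Longrightarrow> j < m \<Longrightarrow> M$$(j,i) = M$$(i,j)"
    using sym M by (metis carrier_matD index_transpose_mat(1))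
  define a where "a = y \<bullet> y"
  define b where "b = y \<bullet> (M *\<^sub>v y)"
  have b0: "b \<ge> 0" using ps y unfolding psd_def b_def by blast
  have a0: "a \<ge> 0" unfolding a_def using y by (simp add: scalar_prod_def sum_nonneg)
  have yMx: "(\<Sum>i<m. \<Sum>j<m. y$i * M$$(i,j) * x$j) = a"
    unfolding a_def using bil_sum[OF M y x] y_def by simp
  have xMy: "(\<Sum>i<m. \<Sum>j<m. x$i * M$$(i,j) * y$j) = a"
  proof -
    have "(\<Sum>i<m. \<Sum>j<m. x$i * M$$(i,j) * y$j) = (\<Sum>j<m. \<Sum>i<m. x$i * M$$(i,j) * y$j)"
      by (rule sum.swap)
    also have "\<dots> = (\<Sum>i<m. \<Sum>j<m. y$i * M$$(i,j) * x$j)"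
      by (intro sum.cong refl) (simp add: symij mult.commute mult.left_commute)
    finally show ?thesis using yMx by simp
  qed
  have key: "0 \<le> 2 * s * a + s^2 * b" for s
  proof -
    define z where "z = x + s \<cdot>\<^sub>v y"
    have z: "z \<in> carrier_vec m" unfolding z_def using x y by simp
    have "0 \<le> z \<bullet> (M *\<^sub>v z)" using ps z unfolding psd_def by blast
    also have "z \<bullet> (M *\<^sub>v z) = (\<Sum>i<m. \<Sum>j<m. (x$i + s * y$i) * M$$(i,j) * (x$j + s * y$j))"
      unfolding bil_sum[OF M z z] using x y unfolding z_def by (intro sum.cong refl) simp
    also have "\<dots> = (\<Sum>i<m. \<Sum>j<m. x$i * M$$(i,j) * x$j + s * (x$i * M$$(i,j) * y$j)
         + s * (y$i * M$$(i,j) * x$j) + s^2 * (y$i * M$$(i,j) * y$j))"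
      by (simp only: expand4)
    also have "\<dots> = (\<Sum>i<m. \<Sum>j<m. x$i * M$$(i,j) * x$j) + s * (\<Sum>i<m. \<Sum>j<m. x$i * M$$(i,j) * y$j)
         + s * (\<Sum>i<m. \<Sum>j<m. y$i * M$$(i,j) * x$j) + s^2 * (\<Sum>i<m. \<Sum>j<m. y$i * M$$(i,j) * y$j)"
      by (simp only: sum.distrib sum_distrib_left)
    also have "\<dots> = 2 * s * a + s^2 * b"
      using x0 xMy yMx unfolding bil_sum[OF M x x, symmetric] b_def bil_sum[OF M y y, symmetric] by simp
    finally show ?thesis .
  qed
  have "a = 0"
  proof (rule ccontr)
    assume "a \<noteq> 0" hence ap: "a > 0" using a0 by simp
    define t where "t = a / (b + 1)"
    have tp: "t > 0" unfolding t_def using ap b0 by simp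
    have "t * b < a" unfolding t_def using ap b0 by (simp add: field_simps)
    hence "t * (- 2 * a + t * b) < 0" using tp ap by (simp add: mult_pos_neg)
    moreover have "2 * (-t) * a + (-t)^2 * b = t * (- 2 * a + t * b)" by (simp add: algebra_simps power2_eq_square)
    ultimately show False using key[of "-t"] by simp
  qed
  hence "\<forall>i\<in>{0..<m}. y$i * y$i = 0" unfolding a_def scalar_prod_def using y
    by (subst (asm) sum_nonneg_eq_0_iff) auto
  hence "y = 0\<^sub>v m" using y by (intro eq_vecI) auto
  thus ?thesis unfolding y_def .
qed

lemma smult_one_mat_vec: assumes x: "(x::real vec) \<in> carrier_vec m"
  shows "(c \<cdot>\<^sub>m 1\<^sub>m m) *\<^sub>v x = c \<cdot>\<^sub>v x"
proof (rule eq_vecI)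
  fix i assume "i < dim_vec (c \<cdot>\<^sub>v x)"
  hence i: "i < m" using x by simp
  have "(\<Sum>ia = 0..<m. c * (if ia = i then 1 else 0) * x $ ia) = (\<Sum>ia = 0..<m. if ia = i then c * x$ia else 0)"
    by (intro sum.cong) auto
  also have "\<dots> = c * x$i" using i by simp
  finally show "((c \<cdot>\<^sub>m 1\<^sub>m m) *\<^sub>v x) $ i = (c \<cdot>\<^sub>v x) $ i" using i x by (simp add: scalar_prod_def)
qed (use x in auto)

lemma psd_inv_pd:
  fixes M X :: "real mat"
  assumes M: "M \<in> carrier_mat m m" and sym: "transpose_mat M = M" and ps: "psd m M"
    and X: "X \<in> carrier_mat m m" and XM: "X * M = c \<cdot>\<^sub>m 1\<^sub>m m" and c: "c \<noteq> 0"
  shows "pd m M"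
  unfolding pd_def
proof (intro conjI ballI impI)
  show "M \<in> carrier_mat m m" by fact
  fix x :: "real vec" assume x: "x \<in> carrier_vec m" and x0: "x \<noteq> 0\<^sub>v m"
  have ge: "0 \<le> x \<bullet> (M *\<^sub>v x)" using ps x unfolding psd_def by blast
  show "0 < x \<bullet> (M *\<^sub>v x)"
  proof (rule ccontr)
    assume "\<not> ?thesis"
    hence "x \<bullet> (M *\<^sub>v x) = 0" using ge by simp
    hence Mx: "M *\<^sub>v x = 0\<^sub>v m" by (rule psd_zero[OF M sym ps x])
    have "(X * M) *\<^sub>v x = X *\<^sub>v (M *\<^sub>v x)" using X M x by (simp add: assoc_mult_mat_vec)
    also have "\<dots> = 0\<^sub>v m" unfolding Mx using X by auto
    finally have "c \<cdot>\<^sub>v x = 0\<^sub>v m" unfolding XM smult_one_mat_vec[OF x] .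
    have "x = 0\<^sub>v m"
    proof (rule eq_vecI)
      fix i assume "i < dim_vec (0\<^sub>v m :: real vec)"
      hence i: "i < m" by simp
      have "(c \<cdot>\<^sub>v x) $ i = 0" using arg_cong[OF \<open>c \<cdot>\<^sub>v x = 0\<^sub>v m\<close>, of "\<lambda>v. v $ i"] i by simp
      thus "x $ i = 0\<^sub>v m $ i" using i x c by simp
    qed (use x in auto)
    with x0 show False by simp
  qed
qed



lemma pd_one: "pd m (1\<^sub>m m)"
  unfolding pd_def
proof (intro conjI ballI impI)
  fix x :: "real vec" assume x: "x \<in> carrier_vec m" and x0: "x \<noteq> 0\<^sub>v m"
  have xx: "x \<bullet> (1\<^sub>m m *\<^sub>v x) = (\<Sum>i\<in>{0..<m}. x$i * x$i)" using x by (simp add: scalar_prod_def)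
  show "0 < x \<bullet> (1\<^sub>m m *\<^sub>v x)"
  proof (rule ccontr)
    assume "\<not> ?thesis"
    hence "(\<Sum>i\<in>{0..<m}. x$i * x$i) = 0" unfolding xx by (simp add: sum_nonneg antisym)
    hence "\<forall>i\<in>{0..<m}. x$i * x$i = 0" by (subst (asm) sum_nonneg_eq_0_iff) auto
    hence "x = 0\<^sub>v m" using x by (intro eq_vecI) auto
    with x0 show False by simp
  qed
qed simp

lemma ln_mult_pos': "0 < (a::real) \<Longrightarrow> 0 < b \<Longrightarrow> ln (a * b) = ln a + ln b"
  by (simp add: ln_mult)

lemma ln_prod_bound:
  assumes "\<forall>e\<in>set es. (e::real) > 0" and mu: "\<mu> > 0"
  shows "ln (prod_list es) \<le> real (length es) * ln \<mu> + sum_list es / \<mu> - real (length es)"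
  using assms(1)
proof (induct es)
  case Nil thus ?case by simp
next
  case (Cons e es)
  have e: "e > 0" and es: "\<forall>e\<in>set es. e > 0" using Cons.prems by auto
  have P: "prod_list es > 0" using es by (induct es) auto
  have "ln (e / \<mu>) \<le> e / \<mu> - 1" using e mu by (intro ln_le_minus_one) simp
  hence le: "ln e \<le> ln \<mu> + e / \<mu> - 1" using e mu by (simp add: ln_div)
  have "ln (prod_list (e # es)) = ln (e * prod_list es)" by simp
  also have "\<dots> = ln e + ln (prod_list es)" using e P by (rule ln_mult_pos')
  also have "\<dots> \<le> (ln \<mu> + e / \<mu> - 1) + (real (length es) * ln \<mu> + sum_list es / \<mu> - real (length es))"
    using le Cons.hyps[OF es] by linarith
  also have "\<dots> = real (length (e # es)) * ln \<mu> + sum_list (e # es) / \<mu> - real (length (e # es))"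
    by (simp add: algebra_simps add_divide_distrib)
  finally show ?case .
qed

lemma det_pos: assumes R: "R \<in> carrier_mat m m" and sR: "transpose_mat R = R" and pR: "pd m R"
  shows "det R > 0"
proof -
  obtain es where "\<forall>e\<in>set es. e > 0" "det (1\<^sub>m m * R) = prod_list es"
    using eig_list[OF one_carrier_mat R _ sR pd_one pR] by auto
  moreover have "prod_list es > 0" using calculation(1) by (induct es) auto
  ultimately show ?thesis using R by simp
qed

lemma mtrace_smult_one: "mtrace (c \<cdot>\<^sub>m 1\<^sub>m m) = c * real m"
  unfolding mtrace_def by simp

lemma ineq_core:
  fixes W R Rs :: "real mat"
  assumes W: "W \<in> carrier_mat m m" and R: "R \<in> carrier_mat m m" and Rs: "Rs \<in> carrier_mat m m"
    and sW: "transpose_mat W = W" and sR: "transpose_mat R = R" and sRs: "transpose_mat Rs = Rs"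
    and pW: "pd m W" and pR: "pd m R" and pRs: "pd m Rs"
    and WRs: "W * Rs = \<mu> \<cdot>\<^sub>m 1\<^sub>m m" and mu: "\<mu> > 0"
  shows "mtrace (W * Rs) - \<mu> * ln (det Rs) \<le> mtrace (W * R) - \<mu> * ln (det R)"
proof -
  obtain es where es: "length es = m" "\<forall>e\<in>set es. e > 0" "det (W * R) = prod_list es"
      "mtrace (W * R) = sum_list es"
    using eig_list[OF W R sW sR pW pR] by blast
  have dW: "det W > 0" by (rule det_pos[OF W sW pW])
  have dR: "det R > 0" by (rule det_pos[OF R sR pR])
  have dRs: "det Rs > 0" by (rule det_pos[OF Rs sRs pRs])
  have b: "ln (det W) + ln (det R) \<le> real m * ln \<mu> + mtrace (W * R) / \<mu> - real m"
  proof -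
    have "ln (det W * det R) = ln (det W) + ln (det R)" using dW dR ln_mult[of "det W" "det R"] by simp
    thus ?thesis using ln_prod_bound[OF es(2) mu] es(1,3,4) det_mult[OF W R] by simp
  qed
  have "det W * det Rs = \<mu> ^ m" using det_mult[OF W Rs] WRs by simp
  hence e: "ln (det W) + ln (det Rs) = real m * ln \<mu>" using dW dRs
    by (metis ln_mult ln_realpow order_less_irrefl)
  have "ln (det R) - ln (det Rs) \<le> mtrace (W * R) / \<mu> - real m" using b e by linarith
  hence "\<mu> * (ln (det R) - ln (det Rs)) \<le> \<mu> * (mtrace (W * R) / \<mu> - real m)"
    using mu by (intro mult_left_mono) auto
  hence "\<mu> * ln (det R) - \<mu> * ln (det Rs) \<le> mtrace (W * R) - \<mu> * real m"
    using mu by (simp add: algebra_simps)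
  moreover have "mtrace (W * Rs) = \<mu> * real m" unfolding WRs by (rule mtrace_smult_one)
  ultimately show ?thesis by linarith
qed



lemma transpose_smult': "transpose_mat (c \<cdot>\<^sub>m A) = c \<cdot>\<^sub>m transpose_mat (A :: real mat)"
  by (intro eq_matI) auto

lemma minner_sum: assumes A: "A \<in> carrier_mat k k" and B: "B \<in> carrier_mat k k"
  shows "minner A B = (\<Sum>i<k. \<Sum>j<k. A$$(j,i) * B$$(j,i))"
  unfolding minner_def mtrace_def using A B
  by (intro sum.cong) (auto simp: scalar_prod_def atLeast0LessThan)

lemma gangster_carrier[simp]: "Y \<in> carrier_mat k k \<Longrightarrow> gangster J Y \<in> carrier_mat k k"
  unfolding gangster_def by simp

lemma gangster_idx: "i < dim_row Y \<Longrightarrow> j < dim_col Y \<Longrightarrow>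
   gangster J Y $$ (i,j) = (if (i,j) \<in> J \<or> (j,i) \<in> J then Y$$(i,j) else 0)"
  unfolding gangster_def by simp

lemma gangster_neg: assumes X: "X \<in> carrier_mat k k" and g: "gangster J (- X) = - X"
  shows "gangster J X = X"
proof (rule eq_matI)
  fix i j assume "i < dim_row X" "j < dim_col X"
  hence ij: "i < k" "j < k" using X by auto
  have c3: "gangster J (- X) $$ (i,j) = (- X) $$ (i,j)" using g by simp
  have c1: "gangster J (- X) $$ (i,j) = (if (i,j) \<in> J \<or> (j,i) \<in> J then (- X)$$(i,j) else 0)"
    by (rule gangster_idx) (use ij X in auto)
  have c2: "(- X) $$ (i,j) = - X$$(i,j)" using ij X by simp
  have c4: "gangster J X $$ (i,j) = (if (i,j) \<in> J \<or> (j,i) \<in> J then X$$(i,j) else 0)"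
    by (rule gangster_idx) (use ij X in auto)
  show "gangster J X $$ (i,j) = X $$ (i,j)"
  proof (cases "(i,j) \<in> J \<or> (j,i) \<in> J")
    case True thus ?thesis using c4 by simp
  next
    case False
    hence "(- X) $$ (i,j) = 0" using c1 c3 by simp
    hence "X $$ (i,j) = 0" using c2 by simp
    thus ?thesis using c4 False by simp
  qed
qed (simp_all add: gangster_def)

lemma minner_gangster: assumes K: "K \<in> carrier_mat k k" and Y: "Y \<in> carrier_mat k k"
  and g: "gangster J K = K"
  shows "minner K Y = minner K (gangster J Y)"
  unfolding minner_sum[OF K Y] minner_sum[OF K gangster_carrier[OF Y]]
proof (intro sum.cong refl)
  fix i j assume i: "i \<in> {..<k}" and j: "j \<in> {..<k}"
  have "K $$ (j,i) = gangster J K $$ (j,i)" using g by simp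
  hence Kji: "K $$ (j,i) = (if (j,i) \<in> J \<or> (i,j) \<in> J then K$$(j,i) else 0)"
    using i j K by (simp add: gangster_idx)
  have gY: "gangster J Y $$ (j,i) = (if (j,i) \<in> J \<or> (i,j) \<in> J then Y$$(j,i) else 0)"
    by (rule gangster_idx) (use i j Y in auto)
  show "K $$ (j, i) * Y $$ (j, i) = K $$ (j, i) * gangster J Y $$ (j, i)"
  proof (cases "(j,i) \<in> J \<or> (i,j) \<in> J")
    case True thus ?thesis using gY by simp
  next
    case False
    hence "K $$ (j,i) = 0" using Kji by simp
    thus ?thesis by simp
  qed
qed

lemma minner_diff: assumes A: "A \<in> carrier_mat k k" and B: "B \<in> carrier_mat k k" and C: "C \<in> carrier_mat k k"
  shows "minner A (B - C) = minner A B - minner A C"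
proof -
  have BC: "B - C \<in> carrier_mat k k" using C by (rule minus_carrier_mat)
  have "(\<Sum>i<k. \<Sum>j<k. A$$(j,i) * (B - C)$$(j,i)) = (\<Sum>i<k. \<Sum>j<k. A$$(j,i) * B$$(j,i) - A$$(j,i) * C$$(j,i))"
    using B C by (intro sum.cong refl) (simp add: right_diff_distrib)
  also have "\<dots> = (\<Sum>i<k. \<Sum>j<k. A$$(j,i) * B$$(j,i)) - (\<Sum>i<k. \<Sum>j<k. A$$(j,i) * C$$(j,i))"
    by (simp only: sum_subtractf)
  finally show ?thesis unfolding minner_sum[OF A B] minner_sum[OF A C] minner_sum[OF A BC] .
qed

lemma minner_add: assumes A: "A \<in> carrier_mat k k" and B: "B \<in> carrier_mat k k" and C: "C \<in> carrier_mat k k"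
  shows "minner (A + B) C = minner A C + minner B C"
proof -
  have AB: "A + B \<in> carrier_mat k k" using A B by simp
  have "(\<Sum>i<k. \<Sum>j<k. (A + B)$$(j,i) * C$$(j,i)) = (\<Sum>i<k. \<Sum>j<k. A$$(j,i) * C$$(j,i) + B$$(j,i) * C$$(j,i))"
    using A B C by (intro sum.cong refl) (simp add: distrib_right)
  also have "\<dots> = (\<Sum>i<k. \<Sum>j<k. A$$(j,i) * C$$(j,i)) + (\<Sum>i<k. \<Sum>j<k. B$$(j,i) * C$$(j,i))"
    by (simp only: sum.distrib)
  finally show ?thesis unfolding minner_sum[OF A C] minner_sum[OF B C] minner_sum[OF AB C] .
qed

lemma minner_VRV:
  fixes Zs V R :: "real mat"
  assumes Zs: "Zs \<in> carrier_mat N N" and sZ: "transpose_mat Zs = Zs"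
    and V: "V \<in> carrier_mat N m" and R: "R \<in> carrier_mat m m"
  shows "minner Zs (V * R * transpose_mat V) = - mtrace ((- (transpose_mat V * Zs * V)) * R)"
proof -
  have VT: "transpose_mat V \<in> carrier_mat m N" using V by simp
  have VR: "V * R \<in> carrier_mat N m" using V R by simp
  have ZV: "Zs * V \<in> carrier_mat N m" using Zs V by simp
  have ZVR: "Zs * V * R \<in> carrier_mat N m" using ZV R by simp
  have "minner Zs (V * R * transpose_mat V) = ctr (Zs * (V * R * transpose_mat V))"
    unfolding minner_def sZ mtrace_ctr ..
  also have "Zs * (V * R * transpose_mat V) = (Zs * V * R) * transpose_mat V"
    using assoc_mult_mat[OF Zs VR VT] assoc_mult_mat[OF Zs V R] by simp
  also have "ctr ((Zs * V * R) * transpose_mat V) = ctr (transpose_mat V * (Zs * V * R))"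
    by (rule ctr_comm[OF ZVR VT])
  also have "transpose_mat V * (Zs * V * R) = (transpose_mat V * Zs * V) * R"
    using assoc_mult_mat[OF VT ZV R] assoc_mult_mat[OF VT Zs V] by simp
  also have "ctr ((transpose_mat V * Zs * V) * R) = - ctr ((- (transpose_mat V * Zs * V)) * R)"
  proof -
    have A: "transpose_mat V * Zs * V \<in> carrier_mat m m" using VT Zs V by simp
    define X where "X = transpose_mat V * Zs * V * R"
    have X: "X \<in> carrier_mat m m" unfolding X_def using A R by simp
    have "(- (transpose_mat V * Zs * V)) * R = - X" unfolding X_def
      by (rule uminus_mult_left_mat) (use A R in auto)
    moreover have "ctr (- X) = - ctr X"
    proof -
      have "ctr (- X) = (\<Sum>i<m. - X$$(i,i))" unfolding ctr_def using X by (intro sum.cong) auto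
      also have "\<dots> = - ctr X" unfolding ctr_def using X by (simp add: sum_negf)
      finally show ?thesis .
    qed
    ultimately show ?thesis unfolding X_def by simp
  qed
  finally show ?thesis unfolding mtrace_ctr .
qed



theorem proposition2:
  fixes n :: nat and C D F :: "real mat" and J :: "(nat \<times> nat) set" and \<mu> :: real
    and Rs Zs :: "real mat"
  assumes "n \<ge> 2"
    and "F \<in> SymM n" and "D \<in> SymM n" and "C \<in> carrier_mat n n"
    and "\<mu> > 0"
    and "Rs \<in> SymM ((n-1)^2+1)" and "Zs \<in> SymM (n^2+1)"
    and "KKT n C D F J \<mu> Rs Zs"
    and "\<forall>R\<in>SymM ((n-1)^2+1). \<forall>Z\<in>SymM (n^2+1).
           KKT n C D F J \<mu> R Z \<longrightarrow> R = Rs \<and> Z = Zs"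
  shows "let Ys = Vhat n * Rs * transpose_mat (Vhat n) in
         pd ((n-1)^2+1) Rs
       \<and> (SUP Z\<in>SymM (n^2+1). L0 n C D F J \<mu> Rs Ys Z) = L0 n C D F J \<mu> Rs Ys Zs
       \<and> L0 n C D F J \<mu> Rs Ys Zs
           = (INF RY\<in>{(R, Y). R \<in> SymM ((n-1)^2+1) \<and> pd ((n-1)^2+1) R \<and> Y \<in> SymM (n^2+1)}.
                L0 n C D F J \<mu> (fst RY) (snd RY) Zs)"
proof -
  define N where "N = n^2+1"
  define m where "m = (n-1)^2+1"
  define V where "V = Vhat n"
  define Ys where "Ys = V * Rs * transpose_mat V"
  define LL where "LL = LQ n C D F"
  have mu: "\<mu> > 0" by fact
  have V: "V \<in> carrier_mat N m" unfolding V_def Vhat_def N_def m_def by simp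
  have VT: "transpose_mat V \<in> carrier_mat m N" using V by simp
  have Rs: "Rs \<in> carrier_mat m m" and sRs: "transpose_mat Rs = Rs"
    using assms(6) unfolding SymM_def m_def by auto
  have Zs: "Zs \<in> carrier_mat N N" and sZs: "transpose_mat Zs = Zs"
    using assms(7) unfolding SymM_def N_def by auto
  have LL: "LL \<in> carrier_mat N N" unfolding LL_def LQ_def N_def by simp
  define W where "W = - (transpose_mat V * Zs * V)"
  have W: "W \<in> carrier_mat m m" unfolding W_def using VT Zs V by simp
  have sW: "transpose_mat W = W"
  proof -
    have "transpose_mat (transpose_mat V * Zs * V) = transpose_mat V * Zs * V"
      using transpose_mult[OF mult_carrier_mat[OF VT Zs] V] transpose_mult[OF VT Zs]
        assoc_mult_mat[OF VT Zs V] sZs by simp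
    thus ?thesis unfolding W_def transpose_uminus by simp
  qed
  have K1: "W * Rs = \<mu> \<cdot>\<^sub>m 1\<^sub>m m" and K2: "gangster J Ys = E00 N"
    and K3: "- (LL + Zs) \<in> SymJ N J" and K4: "psd m Rs" and K5: "psd m W"
    using assms(8) unfolding KKT_def W_def V_def Ys_def LL_def N_def m_def by auto
  have RsW: "Rs * W = \<mu> \<cdot>\<^sub>m 1\<^sub>m m"
  proof -
    have "transpose_mat (W * Rs) = transpose_mat Rs * transpose_mat W" by (rule transpose_mult[OF W Rs])
    hence "Rs * W = transpose_mat (\<mu> \<cdot>\<^sub>m 1\<^sub>m m)" using K1 sW sRs by simp
    thus ?thesis by (simp add: transpose_smult')
  qed
  have pRs: "pd m Rs" by (rule psd_inv_pd[OF Rs sRs K4 W K1]) (use mu in simp)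
  have pW: "pd m W" by (rule psd_inv_pd[OF W sW K5 Rs RsW]) (use mu in simp)
  have Ysc: "Ys \<in> carrier_mat N N" unfolding Ys_def using V Rs VT by simp
  have sYs: "transpose_mat Ys = Ys"
  proof -
    have "transpose_mat Ys = transpose_mat (transpose_mat V) * transpose_mat (V * Rs)"
      unfolding Ys_def by (rule transpose_mult[OF mult_carrier_mat[OF V Rs] VT])
    also have "\<dots> = V * (transpose_mat Rs * transpose_mat V)" using transpose_mult[OF V Rs] by simp
    also have "\<dots> = Ys" unfolding Ys_def sRs using assoc_mult_mat[OF V Rs VT] by simp
    finally show ?thesis .
  qed
  have YsS: "Ys \<in> SymM N" unfolding SymM_def using Ysc sYs by simp
  define K where "K = LL + Zs"
  have Kc: "K \<in> carrier_mat N N" unfolding K_def using LL Zs by simp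
  have gK: "gangster J K = K"
    using K3 gangster_neg[OF Kc] unfolding SymJ_def K_def by auto
  define \<kappa> where "\<kappa> = minner K (E00 N)"
  have E00c: "E00 N \<in> carrier_mat N N" unfolding E00_def by simp
  have val: "L0 n C D F J \<mu> R Y Zs = ereal (\<kappa> + mtrace (W * R) - \<mu> * ln (det R))"
    if R: "R \<in> carrier_mat m m" and Y: "Y \<in> carrier_mat N N" and gY: "gangster J Y = E00 N" for R Y
  proof -
    have VRV: "V * R * transpose_mat V \<in> carrier_mat N N" using V R VT by simp
    have "minner LL Y + minner Zs (Y - V * R * transpose_mat V)
        = minner K Y - minner Zs (V * R * transpose_mat V)"
      unfolding K_def minner_add[OF LL Zs Y] minner_diff[OF Zs Y VRV] by simp
    also have "minner K Y = \<kappa>" unfolding \<kappa>_def minner_gangster[OF Kc Y gK] gY ..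
    also have "minner Zs (V * R * transpose_mat V) = - mtrace (W * R)"
      unfolding W_def by (rule minner_VRV[OF Zs sZs V R])
    finally have e: "minner LL Y + minner Zs (Y - V * R * transpose_mat V) = \<kappa> + mtrace (W * R)" by simp
    have "indI J N Y = 0" unfolding indI_def using gY by simp
    hence "L0 n C D F J \<mu> R Y Zs = ereal (minner LL Y - \<mu> * ln (det R) + minner Zs (Y - V * R * transpose_mat V))"
      unfolding L0_def LL_def V_def N_def by simp
    also have "\<dots> = ereal (\<kappa> + mtrace (W * R) - \<mu> * ln (det R))" using e by (simp add: algebra_simps)
    finally show ?thesis .
  qed
  have const: "L0 n C D F J \<mu> Rs Ys Z = ereal (minner LL Ys - \<mu> * ln (det Rs)) + indI J N Ys"
    if Z: "Z \<in> SymM N" for Z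
  proof -
    have Zc: "Z \<in> carrier_mat N N" using Z unfolding SymM_def by simp
    have "Ys - V * Rs * transpose_mat V = 0\<^sub>m N N" unfolding Ys_def[symmetric] using Ysc by simp
    moreover have "minner Z (0\<^sub>m N N) = 0" unfolding minner_sum[OF Zc zero_carrier_mat] by simp
    ultimately show ?thesis unfolding L0_def LL_def V_def N_def Ys_def by simp
  qed
  have zS: "0\<^sub>m N N \<in> SymM N" unfolding SymM_def by auto
  have sup: "(SUP Z\<in>SymM N. L0 n C D F J \<mu> Rs Ys Z) = L0 n C D F J \<mu> Rs Ys Zs"
  proof -
    have "(SUP Z\<in>SymM N. L0 n C D F J \<mu> Rs Ys Z) = (SUP Z\<in>SymM N. ereal (minner LL Ys - \<mu> * ln (det Rs)) + indI J N Ys)"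
      using const by (intro SUP_cong) auto
    also have "\<dots> = ereal (minner LL Ys - \<mu> * ln (det Rs)) + indI J N Ys"
      using zS by (intro SUP_const) auto
    also have "\<dots> = L0 n C D F J \<mu> Rs Ys Zs" using const[OF assms(7)[folded N_def]] by simp
    finally show ?thesis .
  qed
  define S where "S = {(R, Y). R \<in> SymM m \<and> pd m R \<and> Y \<in> SymM N}"
  have mem: "(Rs, Ys) \<in> S" unfolding S_def using assms(6) pRs YsS unfolding m_def by simp
  have low: "L0 n C D F J \<mu> Rs Ys Zs \<le> L0 n C D F J \<mu> (fst RY) (snd RY) Zs" if RY: "RY \<in> S" for RY
  proof -
    obtain R Y where RYe: "RY = (R, Y)" by fastforce
    have R: "R \<in> carrier_mat m m" and sR: "transpose_mat R = R" and pR: "pd m R"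
      and Y: "Y \<in> carrier_mat N N"
      using RY unfolding RYe S_def SymM_def by auto
    show ?thesis
    proof (cases "gangster J Y = E00 N")
      case True
      have "mtrace (W * Rs) - \<mu> * ln (det Rs) \<le> mtrace (W * R) - \<mu> * ln (det R)"
        by (rule ineq_core[OF W R Rs sW sR sRs pW pR pRs K1 mu])
      thus ?thesis unfolding RYe using val[OF R Y True] val[OF Rs Ysc K2] by simp
    next
      case False
      hence "indI J N Y = \<infinity>" unfolding indI_def by simp
      hence "L0 n C D F J \<mu> R Y Zs = \<infinity>" unfolding L0_def N_def[symmetric] by simp
      thus ?thesis unfolding RYe by simp
    qed
  qed
  have inf: "L0 n C D F J \<mu> Rs Ys Zs = (INF RY\<in>S. L0 n C D F J \<mu> (fst RY) (snd RY) Zs)"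
  proof (rule antisym)
    show "L0 n C D F J \<mu> Rs Ys Zs \<le> (INF RY\<in>S. L0 n C D F J \<mu> (fst RY) (snd RY) Zs)"
      by (rule INF_greatest) (rule low)
    show "(INF RY\<in>S. L0 n C D F J \<mu> (fst RY) (snd RY) Zs) \<le> L0 n C D F J \<mu> Rs Ys Zs"
      using INF_lower[OF mem, of "\<lambda>RY. L0 n C D F J \<mu> (fst RY) (snd RY) Zs"] by simp
  qed
  show ?thesis
    using pRs sup inf unfolding Let_def Ys_def V_def S_def N_def m_def by simp
qed


end
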